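(* The functional $J_\lambda$ is coercive and bounded from below on $\mathcal{N}_\lambda$.
   Context: Let $s\in(0,1)$, $p>1$, $n>ps$, $p_s^*=\frac{np}{n-ps}$, $\Omega\subset\mathbb{R}^n$ a bounded smooth domain, $a,b>0$, $\theta>1$, $\alpha\in(0,1)$, $c\in L^\infty(\Omega)$, $c\ge0$, $\lambda>0$, and $1<p<p\theta<q\le p_s^*$. $X_0$ is the space of measurable $u$ on $\mathbb{R}^n$ vanishing a.e. outside $\Omega$ with $\|u\|:=\big(\int_{\mathbb{R}^{2n}}\frac{|u(x)-u(y)|^p}{|x-y|^{n+ps}}dxdy\big)^{1/p}<\infty$; $\|u\|_r$ is the $L^r(\Omega)$ norm; $u^+=\max\{u,0\}$. $f$ is homogeneous of order $q-1$ in the second variable, $F(x,t)=\int_0^tf(x,\tau)d\tau$, $qF=tf$, $|F(x,t)|\le\gamma|t|^q$. $J_\lambda(u)=\frac ap\|u\|^p+\frac b{p\theta}\|u\|^{p\theta}+\frac1p\int_\Omega(u^+)^p-\frac1{1-\alpha}\int_\Omega c(u^+)^{1-\alpha}-\lambda\int_\Omega F(x,u^+)$, and $\mathcal{N}_\lambda=\{u\in X_0: a\|u\|^p+\|u\|_p^p+b\|u\|^{p\theta}-\int_\Omega c(u^+)^{1-\alpha}-\lambda q\int_\Omega F(x,u^+)=0\}$. *)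

theory Defs
  imports "HOL-Analysis.Analysis"
begin

fun dirderiv :: "'a::euclidean_space list \<Rightarrow> ('a \<Rightarrow> real) \<Rightarrow> 'a \<Rightarrow> real" where
  "dirderiv [] g = g"
| "dirderiv (v # vs) g = (\<lambda>x. frechet_derivative (dirderiv vs g) (at x) v)"

definition smooth_fun :: "('a::euclidean_space \<Rightarrow> real) \<Rightarrow> bool" where
  "smooth_fun g \<longleftrightarrow> (\<forall>vs. dirderiv vs g differentiable_on UNIV)"

definition smooth_bounded_domain :: "'a::euclidean_space set \<Rightarrow> bool" where
  "smooth_bounded_domain \<Omega> \<longleftrightarrow> \<Omega> \<noteq> {} \<and> open \<Omega> \<and> connected \<Omega> \<and> bounded \<Omega> \<and>
     (\<exists>\<rho>. smooth_fun \<rho> \<and> \<Omega> = {x. \<rho> x < 0} \<and>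
          (\<forall>x. \<rho> x = 0 \<longrightarrow> frechet_derivative \<rho> (at x) \<noteq> (\<lambda>v. 0)))"

definition gagliardo :: "real \<Rightarrow> real \<Rightarrow> ('a::euclidean_space \<Rightarrow> real) \<Rightarrow> ennreal" where
  "gagliardo p s u = (\<integral>\<^sup>+ z. ennreal (\<bar>u (fst z) - u (snd z)\<bar> powr p /
       norm (fst z - snd z) powr (real DIM('a) + p * s)) \<partial>(lebesgue \<Otimes>\<^sub>M lebesgue))"

definition X0 :: "real \<Rightarrow> real \<Rightarrow> 'a::euclidean_space set \<Rightarrow> ('a \<Rightarrow> real) set" where
  "X0 p s \<Omega> = {u. u \<in> borel_measurable lebesgue \<and> (AE x in lebesgue. x \<notin> \<Omega> \<longrightarrow> u x = 0)
                  \<and> gagliardo p s u < \<infinity>}"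

definition Xnorm :: "real \<Rightarrow> real \<Rightarrow> ('a::euclidean_space \<Rightarrow> real) \<Rightarrow> real" where
  "Xnorm p s u = enn2real (gagliardo p s u) powr (1 / p)"

definition Lnorm :: "real \<Rightarrow> 'a::euclidean_space set \<Rightarrow> ('a \<Rightarrow> real) \<Rightarrow> real" where
  "Lnorm r \<Omega> u = (LINT x:\<Omega>|lebesgue. \<bar>u x\<bar> powr r) powr (1 / r)"

definition pos_part :: "real \<Rightarrow> real" where
  "pos_part t = max t 0"

definition J_fun :: "real \<Rightarrow> real \<Rightarrow> real \<Rightarrow> real \<Rightarrow> real \<Rightarrow> real \<Rightarrow> ('a::euclidean_space \<Rightarrow> real)
    \<Rightarrow> real \<Rightarrow> 'a set \<Rightarrow> ('a \<Rightarrow> real \<Rightarrow> real) \<Rightarrow> ('a \<Rightarrow> real) \<Rightarrow> real" where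
  "J_fun p s a b \<theta> \<alpha> c lam \<Omega> F u =
     a / p * Xnorm p s u powr p + b / (p * \<theta>) * Xnorm p s u powr (p * \<theta>)
     + 1 / p * (LINT x:\<Omega>|lebesgue. pos_part (u x) powr p)
     - 1 / (1 - \<alpha>) * (LINT x:\<Omega>|lebesgue. c x * pos_part (u x) powr (1 - \<alpha>))
     - lam * (LINT x:\<Omega>|lebesgue. F x (pos_part (u x)))"

definition Nehari :: "real \<Rightarrow> real \<Rightarrow> real \<Rightarrow> real \<Rightarrow> real \<Rightarrow> real \<Rightarrow> ('a::euclidean_space \<Rightarrow> real)
    \<Rightarrow> real \<Rightarrow> real \<Rightarrow> 'a set \<Rightarrow> ('a \<Rightarrow> real \<Rightarrow> real) \<Rightarrow> ('a \<Rightarrow> real) set" where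
  "Nehari p s a b \<theta> \<alpha> c lam q \<Omega> F =
     {u \<in> X0 p s \<Omega>.
        a * Xnorm p s u powr p + Lnorm p \<Omega> u powr p + b * Xnorm p s u powr (p * \<theta>)
        - (LINT x:\<Omega>|lebesgue. c x * pos_part (u x) powr (1 - \<alpha>))
        - lam * q * (LINT x:\<Omega>|lebesgue. F x (pos_part (u x))) = 0}"

end

theory Submission
  imports Defs
begin

lemma sigma_finite_lebesgue: "sigma_finite_measure (lebesgue :: 'a::euclidean_space measure)"
proof
  obtain A :: "'a set set" where A: "countable A" "A \<subseteq> sets lborel" "\<Union>A = space lborel"
    "\<forall>a\<in>A. emeasure lborel a \<noteq> \<infinity>"
    using lborel.sigma_finite_countable by blast
  show "\<exists>A::'a set set. countable A \<and> A \<subseteq> sets lebesgue \<and> \<Union>A = space lebesgue \<and> (\<forall>a\<in>A. emeasure lebesgue a \<noteq> \<infinity>)"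
    apply (rule exI[of _ A])
    using A by (auto simp: emeasure_completion)
qed


lemma poincare:
  fixes \<Omega> :: "'a::euclidean_space set"
  assumes bnd: "bounded \<Omega>" and Om: "\<Omega> \<in> sets lebesgue" and ps: "0 \<le> p * s"
  shows "\<exists>K\<ge>0. \<forall>u \<in> X0 p s \<Omega>. set_integrable lebesgue \<Omega> (\<lambda>x. \<bar>u x\<bar> powr p) \<and>
            (LINT x:\<Omega>|lebesgue. \<bar>u x\<bar> powr p) \<le> K * enn2real (gagliardo p s u)"
proof -
  interpret L: sigma_finite_measure "lebesgue :: 'a measure" by (rule sigma_finite_lebesgue)
  obtain R where R: "R > 0" "\<Omega> \<subseteq> ball 0 R" using bounded_subset_ballD[OF bnd, of 0] by blast
  obtain e :: 'a where e: "e \<in> Basis" using nonempty_Basis by blast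
  have ne: "norm e = 1" using e by simp
  define e0 where "e0 = (R + 2) *\<^sub>R e"
  define B where "B = ball e0 1"
  define D where "D = 2 * R + 3"
  define \<beta> where "\<beta> = real DIM('a) + p * s"
  define Dinv where "Dinv = 1 / D powr \<beta>"
  define vB where "vB = measure lborel B"
  have Dpos: "D > 0" using R by (simp add: D_def)
  have Dinv: "Dinv > 0" using Dpos by (simp add: Dinv_def)
  have vB: "vB > 0" by (simp add: vB_def B_def)
  have eB: "emeasure lebesgue B = ennreal vB"
  proof -
    have Bb: "B \<in> sets lborel" by (simp add: B_def)
    have "emeasure lborel B = ennreal vB" by (simp add: vB_def measure_def emeasure_ball B_def)
    moreover have "emeasure lebesgue B = emeasure lborel B" using Bb by simp
    ultimately show ?thesis by simp
  qed
  have Blb: "B \<in> sets lebesgue" by (simp add: B_def)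
  have ne0: "norm e0 = R + 2" using R ne by (simp add: e0_def)
  have Bout: "y \<notin> \<Omega>" if "y \<in> B" for y
  proof -
    have "dist e0 y < 1" using that by (simp add: B_def)
    then have "norm y > R + 1" using ne0 norm_triangle_ineq2[of e0 y] by (simp add: dist_norm)
    then show ?thesis using R(2) by auto
  qed
  have Bdist: "norm (x - y) \<le> D" "x \<noteq> y" if "x \<in> \<Omega>" "y \<in> B" for x y
  proof -
    have "dist e0 y < 1" using that by (simp add: B_def)
    then have "norm y < R + 3" using ne0 norm_triangle_ineq2[of y e0] by (simp add: dist_norm norm_minus_commute)
    moreover have "norm x < R" using R(2) that by auto
    ultimately show "norm (x - y) \<le> D" using norm_triangle_ineq4[of x y] by (simp add: D_def)
    show "x \<noteq> y" using Bout that by auto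
  qed
  define K where "K = 1 / (Dinv * vB)"
  have K: "K \<ge> 0" using Dinv vB by (simp add: K_def)
  show ?thesis
  proof (intro exI[of _ K] conjI K ballI)
    fix u assume u: "u \<in> X0 p s \<Omega>"
    have um[measurable]: "u \<in> borel_measurable lebesgue" and uAE: "AE x in lebesgue. x \<notin> \<Omega> \<longrightarrow> u x = 0"
      and gfin: "gagliardo p s u < \<infinity>" using u by (auto simp: X0_def)
    define g where "g = (\<lambda>z::'a\<times>'a. ennreal (\<bar>u (fst z) - u (snd z)\<bar> powr p /
       norm (fst z - snd z) powr \<beta>))"
    have f1[measurable]: "(\<lambda>z. fst z) \<in> borel_measurable (lebesgue \<Otimes>\<^sub>M lebesgue)"
      using measurable_compose[OF measurable_fst id_borel_measurable_lebesgue] by (simp add: id_def)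
    have f2[measurable]: "(\<lambda>z. snd z) \<in> borel_measurable (lebesgue \<Otimes>\<^sub>M lebesgue)"
      using measurable_compose[OF measurable_snd id_borel_measurable_lebesgue] by (simp add: id_def)
    have u1[measurable]: "(\<lambda>z. u (fst z)) \<in> borel_measurable (lebesgue \<Otimes>\<^sub>M lebesgue)"
      using measurable_compose[OF measurable_fst um] by simp
    have u2[measurable]: "(\<lambda>z. u (snd z)) \<in> borel_measurable (lebesgue \<Otimes>\<^sub>M lebesgue)"
      using measurable_compose[OF measurable_snd um] by simp
    have gm: "g \<in> borel_measurable (lebesgue \<Otimes>\<^sub>M lebesgue)"
      unfolding g_def by measurable
    have gag: "gagliardo p s u = (\<integral>\<^sup>+ x. \<integral>\<^sup>+ y. g (x, y) \<partial>lebesgue \<partial>lebesgue)"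
    proof -
      have "gagliardo p s u = integral\<^sup>N (lebesgue \<Otimes>\<^sub>M lebesgue) g"
        unfolding gagliardo_def g_def \<beta>_def ..
      also have "\<dots> = (\<integral>\<^sup>+ x. \<integral>\<^sup>+ y. g (x, y) \<partial>lebesgue \<partial>lebesgue)"
        by (rule L.nn_integral_fst[OF gm, symmetric])
      finally show ?thesis .
    qed
    define N where "N = (\<integral>\<^sup>+ x. ennreal (indicator \<Omega> x * \<bar>u x\<bar> powr p) \<partial>lebesgue)"
    have inner: "ennreal (Dinv * vB) * ennreal (indicator \<Omega> x * \<bar>u x\<bar> powr p) \<le> (\<integral>\<^sup>+ y. g (x, y) \<partial>lebesgue)" for x
    proof -
      have "ennreal (Dinv * vB) * ennreal (indicator \<Omega> x * \<bar>u x\<bar> powr p)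
          = (\<integral>\<^sup>+ y. ennreal (Dinv * indicator \<Omega> x * \<bar>u x\<bar> powr p) * indicator B y \<partial>lebesgue)"
      proof -
        have t0: "0 \<le> Dinv * indicator \<Omega> x * \<bar>u x\<bar> powr p" using Dinv by simp
        have "(\<integral>\<^sup>+ y. ennreal (Dinv * indicator \<Omega> x * \<bar>u x\<bar> powr p) * indicator B y \<partial>lebesgue)
            = ennreal (Dinv * indicator \<Omega> x * \<bar>u x\<bar> powr p) * ennreal vB"
          using Blb eB by (simp add: nn_integral_cmult_indicator)
        also have "\<dots> = ennreal (Dinv * indicator \<Omega> x * \<bar>u x\<bar> powr p * vB)"
          using t0 vB by (simp add: ennreal_mult)
        also have "\<dots> = ennreal ((Dinv * vB) * (indicator \<Omega> x * \<bar>u x\<bar> powr p))"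
          by (simp add: mult_ac)
        also have "\<dots> = ennreal (Dinv * vB) * ennreal (indicator \<Omega> x * \<bar>u x\<bar> powr p)"
          using Dinv vB by (simp add: ennreal_mult)
        finally show ?thesis by simp
      qed
      also have "\<dots> \<le> (\<integral>\<^sup>+ y. g (x, y) \<partial>lebesgue)"
      proof (rule nn_integral_mono_AE)
        show "AE y in lebesgue. ennreal (Dinv * indicator \<Omega> x * \<bar>u x\<bar> powr p) * indicator B y \<le> g (x, y)"
          using uAE
        proof eventually_elim
          case (elim y)
          show ?case
          proof (cases "x \<in> \<Omega> \<and> y \<in> B")
            case True
            then have uy: "u y = 0" using elim Bout by auto
            have nxy: "norm (x - y) > 0" "norm (x - y) \<le> D" using Bdist True by auto
            have "norm (x - y) powr \<beta> \<le> D powr \<beta>"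
              using nxy ps by (intro powr_mono2) (auto simp: \<beta>_def)
            moreover have "norm (x - y) powr \<beta> > 0" using nxy by simp
            ultimately have "\<bar>u x\<bar> powr p / D powr \<beta> \<le> \<bar>u x\<bar> powr p / norm (x - y) powr \<beta>"
              using Dpos by (intro divide_left_mono) auto
            moreover have "ennreal (Dinv * indicator \<Omega> x * \<bar>u x\<bar> powr p) * indicator B y = ennreal (\<bar>u x\<bar> powr p / D powr \<beta>)"
              using True by (simp add: Dinv_def)
            moreover have "g (x, y) = ennreal (\<bar>u x\<bar> powr p / norm (x - y) powr \<beta>)"
              using uy by (simp add: g_def)
            ultimately show ?thesis by (simp add: ennreal_leI)
          next
            case False
            then have "ennreal (Dinv * indicator \<Omega> x * \<bar>u x\<bar> powr p) * indicator B y = 0"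
              by (cases "x \<in> \<Omega>") (auto simp: indicator_def)
            then show ?thesis by (metis zero_le)
          qed
        qed
      qed
      finally show ?thesis .
    qed
    have meas: "(\<lambda>x. indicator \<Omega> x * \<bar>u x\<bar> powr p) \<in> borel_measurable lebesgue" 
      using Om by (intro borel_measurable_times borel_measurable_indicator) auto
    have "ennreal (Dinv * vB) * N = (\<integral>\<^sup>+ x. ennreal (Dinv * vB) * ennreal (indicator \<Omega> x * \<bar>u x\<bar> powr p) \<partial>lebesgue)"
      unfolding N_def by (rule nn_integral_cmult[symmetric]) (use meas in measurable)
    also have "\<dots> \<le> gagliardo p s u" unfolding gag by (intro nn_integral_mono inner)
    finally have NG: "ennreal (Dinv * vB) * N \<le> gagliardo p s u" .
    have Nfin: "N < \<infinity>"
    proof -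
      have "ennreal (Dinv * vB) * N < \<infinity>" using NG gfin by (rule le_less_trans)
      then show ?thesis using Dinv vB by (auto simp: ennreal_mult_less_top)
    qed
    have int: "integrable lebesgue (\<lambda>x. indicator \<Omega> x * \<bar>u x\<bar> powr p)"
      by (rule integrableI_nonneg[OF meas]) (simp_all add: N_def[symmetric] Nfin[unfolded infinity_ennreal_def])
    then show "set_integrable lebesgue \<Omega> (\<lambda>x. \<bar>u x\<bar> powr p)"
      by (simp add: set_integrable_def)
    have "(LINT x:\<Omega>|lebesgue. \<bar>u x\<bar> powr p) = enn2real N"
      unfolding set_lebesgue_integral_def N_def using meas
      by (subst integral_eq_nn_integral) simp_all
    moreover have "(Dinv * vB) * enn2real N \<le> enn2real (gagliardo p s u)"
    proof -
      have "enn2real (ennreal (Dinv * vB) * N) \<le> enn2real (gagliardo p s u)"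
        using NG gfin by (intro enn2real_mono) auto
      then show ?thesis using Dinv vB by (simp add: enn2real_mult)
    qed
    ultimately show "(LINT x:\<Omega>|lebesgue. \<bar>u x\<bar> powr p) \<le> K * enn2real (gagliardo p s u)"
    proof -
      have "enn2real N \<le> enn2real (gagliardo p s u) / (Dinv * vB)"
        using \<open>(Dinv * vB) * enn2real N \<le> enn2real (gagliardo p s u)\<close> Dinv vB
        by (subst pos_le_divide_eq) (auto simp: mult.commute)
      then show ?thesis using \<open>(LINT x:\<Omega>|lebesgue. \<bar>u x\<bar> powr p) = enn2real N\<close> by (simp add: K_def)
    qed
  qed
qed


lemma coer_real:
  fixes b' A B \<theta> :: real
  assumes b': "b' > 0" and th: "\<theta> > 1" and A: "A \<ge> 0" and B: "B \<ge> 0"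
  shows "\<exists>T\<ge>1. \<forall>G\<ge>T. M \<le> b' * G powr \<theta> - A * G - B"
proof -
  define Q where "Q = (A + B + \<bar>M\<bar>) / b'"
  have Q: "Q \<ge> 0" using A B b' by (simp add: Q_def)
  define T where "T = max 1 (Q powr (1 / (\<theta> - 1)))"
  show ?thesis
  proof (intro exI[of _ T] conjI allI impI)
    show "T \<ge> 1" by (simp add: T_def)
    fix G assume G: "G \<ge> T"
    have G1: "G \<ge> 1" using G by (simp add: T_def)
    have "Q = (Q powr (1 / (\<theta> - 1))) powr (\<theta> - 1)"
      using Q th by (simp add: powr_powr)
    also have "\<dots> \<le> G powr (\<theta> - 1)"
      using G th by (intro powr_mono2) (auto simp: T_def)
    finally have QG: "Q \<le> G powr (\<theta> - 1)" .
    have "G powr \<theta> = G * G powr (\<theta> - 1)"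
      using G1 by (simp add: powr_diff)
    then have "b' * G powr \<theta> \<ge> b' * (G * Q)"
      using QG G1 b' by (simp add: mult_left_mono)
    also have "b' * (G * Q) = G * (A + B + \<bar>M\<bar>)" using b' by (simp add: Q_def)
    finally have "b' * G powr \<theta> \<ge> G * (A + B + \<bar>M\<bar>)" .
    moreover have "G * (A + B + \<bar>M\<bar>) \<ge> A * G + B + \<bar>M\<bar>"
    proof -
      have "G * (B + \<bar>M\<bar>) \<ge> 1 * (B + \<bar>M\<bar>)" using G1 B by (intro mult_right_mono) auto
      then show ?thesis by (simp add: algebra_simps)
    qed
    ultimately show "M \<le> b' * G powr \<theta> - A * G - B" by linarith
  qed
qed

lemma pt_bound:
  fixes c v M \<alpha> p :: real
  assumes "0 \<le> c" "c \<le> M" "0 < \<alpha>" "\<alpha> < 1" "1 < p"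
  shows "c * pos_part v powr (1 - \<alpha>) \<le> M * (1 + \<bar>v\<bar> powr p)"
proof -
  have "pos_part v powr (1 - \<alpha>) \<le> 1 + \<bar>v\<bar> powr p"
  proof (cases "v \<le> 1")
    case True
    then have "pos_part v powr (1 - \<alpha>) \<le> 1" using assms
      by (intro powr_le1) (auto simp: pos_part_def)
    moreover have "0 \<le> \<bar>v\<bar> powr p" by simp
    ultimately show ?thesis by linarith
  next
    case False
    then have "pos_part v = \<bar>v\<bar>" by (simp add: pos_part_def)
    moreover have "\<bar>v\<bar> powr (1 - \<alpha>) \<le> \<bar>v\<bar> powr p" using False assms
      by (intro powr_mono) auto
    ultimately show ?thesis by simp
  qed
  moreover have "0 \<le> pos_part v powr (1 - \<alpha>)" by simp
  moreover have "0 \<le> 1 + \<bar>v\<bar> powr p" by (simp add: add_nonneg_nonneg)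
  ultimately show ?thesis using assms by (intro mult_mono) auto
qed


theorem lemma2p5:
  fixes \<Omega> :: "'a::euclidean_space set"
    and s p a b \<theta> \<alpha> lam q \<gamma> :: real
    and c :: "'a \<Rightarrow> real"
    and f F :: "'a \<Rightarrow> real \<Rightarrow> real"
  assumes s: "0 < s" "s < 1"
    and p: "1 < p"
    and n_ps: "real DIM('a) > p * s"
    and dom: "smooth_bounded_domain \<Omega>"
    and ab: "a > 0" "b > 0"
    and \<theta>: "\<theta> > 1"
    and \<alpha>: "0 < \<alpha>" "\<alpha> < 1"
    and c_meas: "c \<in> borel_measurable lebesgue"
    and c_bdd: "\<exists>M. AE x in lebesgue. x \<in> \<Omega> \<longrightarrow> \<bar>c x\<bar> \<le> M"
    and c_nonneg: "\<forall>x\<in>\<Omega>. 0 \<le> c x"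
    and lam: "lam > 0"
    and q: "p * \<theta> < q" "q \<le> real DIM('a) * p / (real DIM('a) - p * s)"
    and f_hom: "\<forall>x t \<tau>. t > 0 \<longrightarrow> f x (t * \<tau>) = t powr (q - 1) * f x \<tau>"
    and F_def: "\<forall>x t. F x t = (LBINT \<tau>=0..t. f x \<tau>)"
    and qF: "\<forall>x t. q * F x t = t * f x t"
    and F_bound: "\<forall>x t. \<bar>F x t\<bar> \<le> \<gamma> * \<bar>t\<bar> powr q"
  shows "(\<forall>M. \<exists>R. \<forall>u \<in> Nehari p s a b \<theta> \<alpha> c lam q \<Omega> F.
             Xnorm p s u \<ge> R \<longrightarrow> J_fun p s a b \<theta> \<alpha> c lam \<Omega> F u \<ge> M)
       \<and> (\<exists>C. \<forall>u \<in> Nehari p s a b \<theta> \<alpha> c lam q \<Omega> F. J_fun p s a b \<theta> \<alpha> c lam \<Omega> F u \<ge> C)"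
proof -
  have bnd: "bounded \<Omega>" and opn: "open \<Omega>" using dom by (auto simp: smooth_bounded_domain_def)
  have Ob: "\<Omega> \<in> sets lborel" using opn by simp
  have Om: "\<Omega> \<in> sets lebesgue" using Ob by simp
  have Ofin: "emeasure lebesgue \<Omega> < \<infinity>"
  proof -
    have "emeasure lebesgue \<Omega> = emeasure lborel \<Omega>" using Ob by simp
    then show ?thesis using emeasure_bounded_finite[OF bnd] by simp
  qed
  have ps: "0 \<le> p * s" using p s by simp
  obtain K where K: "K \<ge> 0" and KP: "\<And>u. u \<in> X0 p s \<Omega> \<Longrightarrow> set_integrable lebesgue \<Omega> (\<lambda>x. \<bar>u x\<bar> powr p) \<and>
            (LINT x:\<Omega>|lebesgue. \<bar>u x\<bar> powr p) \<le> K * enn2real (gagliardo p s u)"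
    using poincare[OF bnd Om ps] by blast
  obtain Mc where Mc: "AE x in lebesgue. x \<in> \<Omega> \<longrightarrow> \<bar>c x\<bar> \<le> Mc" using c_bdd by blast
  define M' where "M' = max Mc 0"
  have M'0: "M' \<ge> 0" by (simp add: M'_def)
  define V where "V = measure lebesgue \<Omega>"
  have V0: "V \<ge> 0" by (simp add: V_def)
  have p0: "p > 0" using p by simp
  have pth: "p * \<theta> > p" using p \<theta> by simp
  have q1: "q > 1" using pth p q(1) by linarith
  have q0: "q > 0" using q1 by simp
  define b' where "b' = b * (1 / (p * \<theta>) - 1 / q)"
  define k where "k = 1 / (1 - \<alpha>) - 1 / q"
  have b'0: "b' > 0"
  proof -
    have pt0: "p * \<theta> > 0" using pth p by linarith
    have "1 / q < 1 / (p * \<theta>)" using q(1) pt0 q0 by (intro divide_strict_left_mono) (auto simp: zero_less_mult_iff)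
    then show ?thesis using ab by (simp add: b'_def)
  qed
  have k0: "k > 0"
  proof -
    have "1 / q < 1 / (1 - \<alpha>)" using q1 \<alpha> q0 by (intro divide_strict_left_mono) (auto simp: zero_less_mult_iff)
    then show ?thesis by (simp add: k_def)
  qed
  define A where "A = K / q + k * M' * K"
  define B where "B = k * M' * V"
  have A0: "A \<ge> 0" using K q0 k0 M'0 by (simp add: A_def)
  have B0: "B \<ge> 0" using V0 k0 M'0 by (simp add: B_def)
  have main: "J_fun p s a b \<theta> \<alpha> c lam \<Omega> F u \<ge> b' * enn2real (gagliardo p s u) powr \<theta> - A * enn2real (gagliardo p s u) - B
     \<and> Xnorm p s u = enn2real (gagliardo p s u) powr (1 / p)"
    if u: "u \<in> Nehari p s a b \<theta> \<alpha> c lam q \<Omega> F" for u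
  proof -
    define G where "G = enn2real (gagliardo p s u)"
    have G0: "G \<ge> 0" by (simp add: G_def)
    have uX: "u \<in> X0 p s \<Omega>" using u by (simp add: Nehari_def)
    have um[measurable]: "u \<in> borel_measurable lebesgue" using uX by (simp add: X0_def)
    have X: "Xnorm p s u = G powr (1 / p)" by (simp add: Xnorm_def G_def)
    have XG1: "Xnorm p s u powr p = G" using X G0 p0 by (simp add: powr_powr)
    have XG2: "Xnorm p s u powr (p * \<theta>) = G powr \<theta>" using X G0 p0 by (simp add: powr_powr)
    define Lp where "Lp = (LINT x:\<Omega>|lebesgue. \<bar>u x\<bar> powr p)"
    have intu: "set_integrable lebesgue \<Omega> (\<lambda>x. \<bar>u x\<bar> powr p)" and LpK: "Lp \<le> K * G"
      using KP[OF uX] by (auto simp: Lp_def G_def)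
    have Lp0: "Lp \<ge> 0" unfolding Lp_def set_lebesgue_integral_def
      by (intro integral_nonneg_AE) auto
    have LN: "Lnorm p \<Omega> u powr p = Lp" using Lp0 p0 by (simp add: Lnorm_def Lp_def[symmetric] powr_powr)
    define C where "C = (LINT x:\<Omega>|lebesgue. c x * pos_part (u x) powr (1 - \<alpha>))"
    define P where "P = (LINT x:\<Omega>|lebesgue. pos_part (u x) powr p)"
    define I where "I = (LINT x:\<Omega>|lebesgue. F x (pos_part (u x)))"
    have P0: "P \<ge> 0" unfolding P_def set_lebesgue_integral_def
      by (intro integral_nonneg_AE) auto
    have CB: "C \<le> M' * V + M' * Lp"
    proof (cases "set_integrable lebesgue \<Omega> (\<lambda>x. c x * pos_part (u x) powr (1 - \<alpha>))")
      case True
      have i1: "set_integrable lebesgue \<Omega> (\<lambda>x. 1::real)"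
        using Om Ofin by (simp add: set_integrable_def)
      have i12: "set_integrable lebesgue \<Omega> (\<lambda>x. 1 + \<bar>u x\<bar> powr p)"
        by (rule set_integral_add(1)[OF i1 intu])
      have i2: "set_integrable lebesgue \<Omega> (\<lambda>x. M' * (1 + \<bar>u x\<bar> powr p))"
        using i12 by (rule set_integrable_mult_right)
      have "C \<le> (LINT x:\<Omega>|lebesgue. M' * (1 + \<bar>u x\<bar> powr p))"
        unfolding C_def
      proof (rule set_integral_mono_AE[OF True i2])
        show "AE x\<in>\<Omega> in lebesgue. c x * pos_part (u x) powr (1 - \<alpha>) \<le> M' * (1 + \<bar>u x\<bar> powr p)"
          using Mc
        proof eventually_elim
          case (elim x)
          show ?case
          proof
            assume x: "x \<in> \<Omega>"
            then have "0 \<le> c x" "c x \<le> M'" using elim c_nonneg by (auto simp: M'_def)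
            then show "c x * pos_part (u x) powr (1 - \<alpha>) \<le> M' * (1 + \<bar>u x\<bar> powr p)"
              using \<alpha> p by (intro pt_bound) auto
          qed
        qed
      qed
      also have "\<dots> = M' * (LINT x:\<Omega>|lebesgue. 1 + \<bar>u x\<bar> powr p)" by simp
      also have "(LINT x:\<Omega>|lebesgue. 1 + \<bar>u x\<bar> powr p) = (LINT x:\<Omega>|lebesgue. (1::real)) + Lp"
        unfolding Lp_def by (rule set_integral_add(2)[OF i1 intu])
      also have "(LINT x:\<Omega>|lebesgue. (1::real)) = V"
        using Om Ofin by (simp add: set_integral_const V_def)
      finally show ?thesis by (simp add: algebra_simps)
    next
      case False
      then have "C = 0" unfolding C_def set_lebesgue_integral_def set_integrable_def
        by (rule not_integrable_integral_eq)
      then show ?thesis using M'0 V0 Lp0 by simp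
    qed
    have eq: "a * G + Lp + b * G powr \<theta> - C - lam * q * I = 0"
      using u XG1 XG2 LN by (simp add: Nehari_def C_def I_def)
    have J: "J_fun p s a b \<theta> \<alpha> c lam \<Omega> F u = a / p * G + b / (p * \<theta>) * G powr \<theta> + 1 / p * P
        - 1 / (1 - \<alpha>) * C - lam * I"
      using XG1 XG2 by (simp add: J_fun_def C_def I_def P_def)
    have lamI: "lam * I = (a * G + Lp + b * G powr \<theta> - C) / q"
      using eq q0 by (simp add: field_simps)
    have J2: "J_fun p s a b \<theta> \<alpha> c lam \<Omega> F u
        = a * (1 / p - 1 / q) * G + b' * G powr \<theta> + P / p - Lp / q - k * C"
      unfolding J lamI b'_def k_def using q0 p0 \<alpha> by (simp add: field_simps)
    have t1: "0 \<le> a * (1 / p - 1 / q) * G"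
    proof -
      have pq: "p \<le> q" using pth q(1) by linarith
      have "1 / q \<le> 1 / p" using pq p0 q0 by (intro divide_left_mono) (auto simp: zero_less_mult_iff)
      then show ?thesis using ab G0 by simp
    qed
    have t2: "0 \<le> P / p" using P0 p0 by simp
    have t3: "Lp / q \<le> K / q * G" using LpK q0 by (simp add: divide_right_mono)
    have t4: "k * C \<le> k * M' * V + k * M' * Lp" using CB k0
      by (metis distrib_left less_imp_le mult.assoc mult_left_mono)
    have t5: "k * M' * Lp \<le> k * M' * K * G"
      using LpK k0 M'0 by (metis less_imp_le mult.assoc mult_left_mono mult_nonneg_nonneg)
    have AG: "A * G = K / q * G + k * M' * K * G" by (simp add: A_def algebra_simps)
    show ?thesis
      using J2 t1 t2 t3 t4 t5 AG X by (simp add: G_def[symmetric] B_def)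
  qed
  show ?thesis
  proof
    show "\<forall>M. \<exists>R. \<forall>u \<in> Nehari p s a b \<theta> \<alpha> c lam q \<Omega> F.
             Xnorm p s u \<ge> R \<longrightarrow> J_fun p s a b \<theta> \<alpha> c lam \<Omega> F u \<ge> M"
    proof
      fix M
      obtain T where T: "T \<ge> 1" "\<And>G. G \<ge> T \<Longrightarrow> M \<le> b' * G powr \<theta> - A * G - B"
        using coer_real[OF b'0 \<theta> A0 B0, of M] by blast
      show "\<exists>R. \<forall>u \<in> Nehari p s a b \<theta> \<alpha> c lam q \<Omega> F.
             Xnorm p s u \<ge> R \<longrightarrow> J_fun p s a b \<theta> \<alpha> c lam \<Omega> F u \<ge> M"
      proof (intro exI[of _ T] ballI impI)
        fix u assume u: "u \<in> Nehari p s a b \<theta> \<alpha> c lam q \<Omega> F" and XT: "Xnorm p s u \<ge> T"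
        define G where "G = enn2real (gagliardo p s u)"
        have G0: "G \<ge> 0" by (simp add: G_def)
        have m: "J_fun p s a b \<theta> \<alpha> c lam \<Omega> F u \<ge> b' * G powr \<theta> - A * G - B"
          and X: "Xnorm p s u = G powr (1 / p)" using main[OF u] by (auto simp: G_def)
        have X1: "Xnorm p s u \<ge> 1" using XT T by simp
        have "G = Xnorm p s u powr p" using X G0 p0 by (simp add: powr_powr)
        also have "\<dots> \<ge> Xnorm p s u powr 1" using X1 p by (intro powr_mono) auto
        finally have "G \<ge> Xnorm p s u" using X1 by simp
        then have "G \<ge> T" using XT by simp
        then show "J_fun p s a b \<theta> \<alpha> c lam \<Omega> F u \<ge> M" using T(2)[of G] m by simp
      qed
    qed
  next
    obtain T where T: "T \<ge> 1" "\<And>G. G \<ge> T \<Longrightarrow> 0 \<le> b' * G powr \<theta> - A * G - B"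
      using coer_real[OF b'0 \<theta> A0 B0, of 0] by blast
    show "\<exists>C. \<forall>u \<in> Nehari p s a b \<theta> \<alpha> c lam q \<Omega> F. J_fun p s a b \<theta> \<alpha> c lam \<Omega> F u \<ge> C"
    proof (intro exI[of _ "- A * T - B"] ballI)
      fix u assume u: "u \<in> Nehari p s a b \<theta> \<alpha> c lam q \<Omega> F"
      define G where "G = enn2real (gagliardo p s u)"
      have G0: "G \<ge> 0" by (simp add: G_def)
      have m: "J_fun p s a b \<theta> \<alpha> c lam \<Omega> F u \<ge> b' * G powr \<theta> - A * G - B"
        using main[OF u] by (auto simp: G_def)
      show "J_fun p s a b \<theta> \<alpha> c lam \<Omega> F u \<ge> - A * T - B"
      proof (cases "G \<ge> T")
        case True
        then have "0 \<le> b' * G powr \<theta> - A * G - B" by (rule T(2))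
        moreover have "0 \<le> A * T" using A0 T by simp
        ultimately show ?thesis using m B0 A0 by linarith
      next
        case False
        then have "A * G \<le> A * T" using A0 by (intro mult_left_mono) auto
        moreover have "0 \<le> b' * G powr \<theta>" using b'0 by simp
        ultimately show ?thesis using m B0 A0 by linarith
      qed
    qed
  qed
qed

end
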